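(* For an implication of canonical form $(\ast)$ and an environment $\eta$, the Parametricity Condition holds if and only if the implication is $n$-ary $\eta$-valid for every $n\ge1$.
   Context: $\mathsf{Heap}$: finite partial functions $\mathsf{PosInt}\to\mathsf{Int}$; $g\sqsubseteq h$ means $h$ extends $g$; $h\cdot g$ union of disjoint heaps; componentwise on $\mathsf{Heap}^n$. $\mathsf{IRel}_n$: upward closed subsets of $\mathsf{Heap}^n$; $p*q=\{\mathbf f\cdot\mathbf g\mid\mathbf f\in p,\mathbf g\in q,\text{componentwise disjoint}\}$; $\Delta_n(X)=\{(h_1,\dots,h_n)\mid\exists f\in X.\ \forall k.\ f\sqsubseteq h_k\}$. Assertions: built from primitive assertions $P$, assertion variables, $\mathsf{true},\mathsf{false},\wedge,\vee,*$, quantifiers over integer variables. $n$-ary meaning under $\eta$ and $\rho:\mathsf{AVar}\to\mathsf{IRel}_n$: $[\![P]\!]^n=\Delta_n([\![P]\!]^{\mathrm{prim}}_\eta)$, $[\![a]\!]^n=\rho(a)$, connectives by $\mathsf{Heap}^n,\emptyset,\cap,\cup,*$, quantifiers by unions/intersections. $n$-ary $\eta$-validity of $\varphi\Rightarrow\psi$: $[\![\varphi]\!]^n_{\eta,\rho}\subseteq[\![\psi]\!]^n_{\eta,\rho}$ for all $\rho:\mathsf{AVar}\to\mathsf{IRel}_n$. Canonical form $(\ast)$: $\bigwedge_{i=1}^M\varphi_i*a_{i,1}*\cdots*a_{i,M_i}\Rightarrow\bigvee_{j=1}^N\psi_j*b_{j,1}*\cdots*b_{j,N_j}$, $M\ge1$,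 $N\ge0$, $\varphi_i,\psi_j$ free of assertion variables, every $b_{j,k}$ among the $a_{i,k}$. $V=\{a_{i,k}\}$; $\Pi(i)(c)=|\{k\mid a_{i,k}=c\}|$, $\Omega(j)(c)=|\{k\mid b_{j,k}=c\}|$; $\Pi(i)\ge\Omega(j)$ iff $\Pi(i)(c)\ge\Omega(j)(c)$ for all $c\in V$. Disjunct $j$ is empty if $N_j=0$. Parametricity Condition: for all $h,h_1,\dots,h_M\in\mathsf{Heap}$ with $h_i\sqsubseteq h$ and $h_i\in[\![\varphi_i]\!]^1_\eta$ for all $i$, either (1) there are $i,j$ with $h_i\in[\![\psi_j]\!]^1_\eta$ and $\Pi(i)\ge\Omega(j)$, or (2) there is an empty disjunct $j$ with $h\in[\![\psi_j]\!]^1_\eta$. *)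

theory Defs
  imports Main
begin

type_synonym heap = "int \<rightharpoonup> int"

definition Heap :: "heap set" where
  "Heap = {h. finite (dom h) \<and> dom h \<subseteq> {x. x > 0}}"

definition HeapN :: "nat \<Rightarrow> heap list set" where
  "HeapN n = {hs. length hs = n \<and> (\<forall>h\<in>set hs. h \<in> Heap)}"

definition le_tuple :: "heap list \<Rightarrow> heap list \<Rightarrow> bool" where
  "le_tuple gs hs \<longleftrightarrow> length gs = length hs \<and> (\<forall>k<length hs. gs ! k \<subseteq>\<^sub>m hs ! k)"

definition IRel :: "nat \<Rightarrow> heap list set set" where
  "IRel n = {p. p \<subseteq> HeapN n \<and> (\<forall>gs\<in>p. \<forall>hs\<in>HeapN n. le_tuple gs hs \<longrightarrow> hs \<in> p)}"

definition disj_tuple :: "heap list \<Rightarrow> heap list \<Rightarrow> bool" where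
  "disj_tuple fs gs \<longleftrightarrow> length fs = length gs \<and>
     (\<forall>k<length fs. dom (fs ! k) \<inter> dom (gs ! k) = {})"

definition union_tuple :: "heap list \<Rightarrow> heap list \<Rightarrow> heap list" where
  "union_tuple fs gs = map2 (\<lambda>f g. f ++ g) fs gs"

definition sep_star :: "heap list set \<Rightarrow> heap list set \<Rightarrow> heap list set" where
  "sep_star p q = {union_tuple fs gs | fs gs. fs \<in> p \<and> gs \<in> q \<and> disj_tuple fs gs}"

definition Delta :: "nat \<Rightarrow> heap set \<Rightarrow> heap list set" where
  "Delta n X = {hs. length hs = n \<and> (\<forall>h\<in>set hs. h \<in> Heap) \<and>
                    (\<exists>f\<in>X. \<forall>k<n. f \<subseteq>\<^sub>m hs ! k)}"

text \<open>'p: primitive assertions, 'v: integer variables, 'a: assertion variables.\<close>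
datatype ('p, 'v, 'a) assn =
    Prim 'p
  | AVar 'a
  | ATrue
  | AFalse
  | Conj "('p, 'v, 'a) assn" "('p, 'v, 'a) assn"
  | Disj "('p, 'v, 'a) assn" "('p, 'v, 'a) assn"
  | Star "('p, 'v, 'a) assn" "('p, 'v, 'a) assn"
  | Ex 'v "('p, 'v, 'a) assn"
  | All 'v "('p, 'v, 'a) assn"

fun avars :: "('p, 'v, 'a) assn \<Rightarrow> 'a set" where
  "avars (Prim P) = {}"
| "avars (AVar a) = {a}"
| "avars ATrue = {}"
| "avars AFalse = {}"
| "avars (Conj p q) = avars p \<union> avars q"
| "avars (Disj p q) = avars p \<union> avars q"
| "avars (Star p q) = avars p \<union> avars q"
| "avars (Ex x p) = avars p"
| "avars (All x p) = avars p"

text \<open>n-ary meaning. prim is the primitive semantics: prim P eta is the set of heaps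
  denoted by the primitive assertion P under the integer environment eta.\<close>
fun sem :: "('p \<Rightarrow> ('v \<Rightarrow> int) \<Rightarrow> heap set) \<Rightarrow> nat \<Rightarrow> ('v \<Rightarrow> int) \<Rightarrow> ('a \<Rightarrow> heap list set)
             \<Rightarrow> ('p, 'v, 'a) assn \<Rightarrow> heap list set" where
  "sem prim n \<eta> \<rho> (Prim P) = Delta n (prim P \<eta>)"
| "sem prim n \<eta> \<rho> (AVar a) = \<rho> a"
| "sem prim n \<eta> \<rho> ATrue = HeapN n"
| "sem prim n \<eta> \<rho> AFalse = {}"
| "sem prim n \<eta> \<rho> (Conj p q) = sem prim n \<eta> \<rho> p \<inter> sem prim n \<eta> \<rho> q"
| "sem prim n \<eta> \<rho> (Disj p q) = sem prim n \<eta> \<rho> p \<union> sem prim n \<eta> \<rho> q"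
| "sem prim n \<eta> \<rho> (Star p q) = sep_star (sem prim n \<eta> \<rho> p) (sem prim n \<eta> \<rho> q)"
| "sem prim n \<eta> \<rho> (Ex x p) = (\<Union>v. sem prim n (\<eta>(x := v)) \<rho> p)"
| "sem prim n \<eta> \<rho> (All x p) = HeapN n \<inter> (\<Inter>v. sem prim n (\<eta>(x := v)) \<rho> p)"

definition valid_n :: "('p \<Rightarrow> ('v \<Rightarrow> int) \<Rightarrow> heap set) \<Rightarrow> nat \<Rightarrow> ('v \<Rightarrow> int)
    \<Rightarrow> ('p, 'v, 'a) assn \<Rightarrow> ('p, 'v, 'a) assn \<Rightarrow> bool" where
  "valid_n prim n \<eta> \<phi> \<psi> \<longleftrightarrow>
     (\<forall>\<rho>. (\<forall>a. \<rho> a \<in> IRel n) \<longrightarrow> sem prim n \<eta> \<rho> \<phi> \<subseteq> sem prim n \<eta> \<rho> \<psi>)"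

text \<open>A canonical implication is given by a list L of pairs (phi_i, [a_i1,...,a_iMi])
  (the conjuncts) and a list R of pairs (psi_j, [b_j1,...,b_jNj]) (the disjuncts).\<close>

definition star_vars :: "('p, 'v, 'a) assn \<Rightarrow> 'a list \<Rightarrow> ('p, 'v, 'a) assn" where
  "star_vars \<phi> as = foldl Star \<phi> (map AVar as)"

fun big_conj :: "('p, 'v, 'a) assn list \<Rightarrow> ('p, 'v, 'a) assn" where
  "big_conj [] = ATrue"
| "big_conj [p] = p"
| "big_conj (p # ps) = Conj p (big_conj ps)"

fun big_disj :: "('p, 'v, 'a) assn list \<Rightarrow> ('p, 'v, 'a) assn" where
  "big_disj [] = AFalse"
| "big_disj [p] = p"
| "big_disj (p # ps) = Disj p (big_disj ps)"

definition canon_lhs :: "(('p, 'v, 'a) assn \<times> 'a list) list \<Rightarrow> ('p, 'v, 'a) assn" where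
  "canon_lhs L = big_conj (map (\<lambda>(\<phi>, as). star_vars \<phi> as) L)"

definition canon_rhs :: "(('p, 'v, 'a) assn \<times> 'a list) list \<Rightarrow> ('p, 'v, 'a) assn" where
  "canon_rhs R = big_disj (map (\<lambda>(\<psi>, bs). star_vars \<psi> bs) R)"

definition canonical :: "(('p, 'v, 'a) assn \<times> 'a list) list \<Rightarrow> (('p, 'v, 'a) assn \<times> 'a list) list \<Rightarrow> bool" where
  "canonical L R \<longleftrightarrow> L \<noteq> [] \<and>
     (\<forall>(\<phi>, as)\<in>set L. avars \<phi> = {}) \<and>
     (\<forall>(\<psi>, bs)\<in>set R. avars \<psi> = {}) \<and>
     (\<forall>(\<psi>, bs)\<in>set R. set bs \<subseteq> (\<Union>(\<phi>, as)\<in>set L. set as))"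

definition Vset :: "(('p, 'v, 'a) assn \<times> 'a list) list \<Rightarrow> 'a set" where
  "Vset L = (\<Union>(\<phi>, as)\<in>set L. set as)"

definition Pi :: "(('p, 'v, 'a) assn \<times> 'a list) list \<Rightarrow> nat \<Rightarrow> 'a \<Rightarrow> nat" where
  "Pi L i c = length (filter (\<lambda>a. a = c) (snd (L ! i)))"

definition Omega :: "(('p, 'v, 'a) assn \<times> 'a list) list \<Rightarrow> nat \<Rightarrow> 'a \<Rightarrow> nat" where
  "Omega R j c = length (filter (\<lambda>b. b = c) (snd (R ! j)))"

definition Pi_ge_Omega :: "(('p, 'v, 'a) assn \<times> 'a list) list \<Rightarrow> (('p, 'v, 'a) assn \<times> 'a list) list
    \<Rightarrow> nat \<Rightarrow> nat \<Rightarrow> bool" where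
  "Pi_ge_Omega L R i j \<longleftrightarrow> (\<forall>c\<in>Vset L. Pi L i c \<ge> Omega R j c)"

text \<open>Unary meaning of an assertion free of assertion variables (rho is irrelevant).\<close>
definition sem1 :: "('p \<Rightarrow> ('v \<Rightarrow> int) \<Rightarrow> heap set) \<Rightarrow> ('v \<Rightarrow> int) \<Rightarrow> ('p, 'v, 'a) assn \<Rightarrow> heap set" where
  "sem1 prim \<eta> \<phi> = {h. [h] \<in> sem prim 1 \<eta> (\<lambda>_. {}) \<phi>}"

definition parametricity_condition :: "('p \<Rightarrow> ('v \<Rightarrow> int) \<Rightarrow> heap set) \<Rightarrow> ('v \<Rightarrow> int)
    \<Rightarrow> (('p, 'v, 'a) assn \<times> 'a list) list \<Rightarrow> (('p, 'v, 'a) assn \<times> 'a list) list \<Rightarrow> bool" where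
  "parametricity_condition prim \<eta> L R \<longleftrightarrow>
     (\<forall>h hs. h \<in> Heap \<longrightarrow> length hs = length L \<longrightarrow>
        (\<forall>i<length L. hs ! i \<in> Heap \<and> hs ! i \<subseteq>\<^sub>m h \<and> hs ! i \<in> sem1 prim \<eta> (fst (L ! i))) \<longrightarrow>
        (\<exists>i<length L. \<exists>j<length R. hs ! i \<in> sem1 prim \<eta> (fst (R ! j)) \<and> Pi_ge_Omega L R i j) \<or>
        (\<exists>j<length R. snd (R ! j) = [] \<and> h \<in> sem1 prim \<eta> (fst (R ! j))))"

end

theory Submission
  imports Defs "HOL-Library.Nat_Bijection"
begin


lemma Heap_le: "g \<subseteq>\<^sub>m h \<Longrightarrow> h \<in> Heap \<Longrightarrow> g \<in> Heap"
  unfolding Heap_def using map_le_implies_dom_le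
  by (metis (no_types, lifting) finite_subset mem_Collect_eq order_trans)

lemma Heap_restrict: "h \<in> Heap \<Longrightarrow> h |` A \<in> Heap"
  by (rule Heap_le[of _ h]) (auto simp: map_le_def)

lemma Heap_add: "f \<in> Heap \<Longrightarrow> g \<in> Heap \<Longrightarrow> f ++ g \<in> Heap"
  unfolding Heap_def by auto

lemma HeapN_iff: "hs \<in> HeapN n \<longleftrightarrow> length hs = n \<and> (\<forall>c<n. hs ! c \<in> Heap)"
  unfolding HeapN_def by (auto simp: in_set_conv_nth) (metis nth_mem)

definition ustar :: "heap set \<Rightarrow> heap set \<Rightarrow> heap set" where
  "ustar X Y = {f ++ g | f g. f \<in> X \<and> g \<in> Y \<and> dom f \<inter> dom g = {}}"

definition upc :: "heap set \<Rightarrow> bool" where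
  "upc X \<longleftrightarrow> X \<subseteq> Heap \<and> (\<forall>h\<in>X. \<forall>h'\<in>Heap. h \<subseteq>\<^sub>m h' \<longrightarrow> h' \<in> X)"

fun U :: "('p \<Rightarrow> ('v \<Rightarrow> int) \<Rightarrow> heap set) \<Rightarrow> ('v \<Rightarrow> int) \<Rightarrow> ('p, 'v, 'a) assn \<Rightarrow> heap set" where
  "U prim \<eta> (Prim P) = {h\<in>Heap. \<exists>f\<in>prim P \<eta>. f \<subseteq>\<^sub>m h}"
| "U prim \<eta> (AVar a) = {}"
| "U prim \<eta> ATrue = Heap"
| "U prim \<eta> AFalse = {}"
| "U prim \<eta> (Conj p q) = U prim \<eta> p \<inter> U prim \<eta> q"
| "U prim \<eta> (Disj p q) = U prim \<eta> p \<union> U prim \<eta> q"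
| "U prim \<eta> (Star p q) = ustar (U prim \<eta> p) (U prim \<eta> q)"
| "U prim \<eta> (Ex x p) = (\<Union>v. U prim (\<eta>(x := v)) p)"
| "U prim \<eta> (All x p) = Heap \<inter> (\<Inter>v. U prim (\<eta>(x := v)) p)"

lemma map_le_add_mono:
  assumes "x \<subseteq>\<^sub>m f" "y \<subseteq>\<^sub>m g" "dom f \<inter> dom g = {}"
  shows "x ++ y \<subseteq>\<^sub>m f ++ g"
  unfolding map_le_def
proof
  fix a assume a: "a \<in> dom (x ++ y)"
  show "(x ++ y) a = (f ++ g) a"
  proof (cases "a \<in> dom y")
    case True
    then have "a \<in> dom g" using assms(2) map_le_implies_dom_le by blast
    then show ?thesis using True assms(2) by (auto simp: map_add_def map_le_def)
  next
    case False
    then have ax: "a \<in> dom x" using a by auto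
    then have "a \<in> dom f" using assms(1) map_le_implies_dom_le by blast
    then have "a \<notin> dom g" using assms(3) by blast
    then show ?thesis using False ax assms(1) by (auto simp: map_add_def map_le_def domIff split: option.splits)
  qed
qed

lemma restrict_split: "(h |` A) ++ (h |` (- A)) = h"
  by (rule ext) (auto simp: map_add_def restrict_map_def split: option.splits)

lemma map_le_add_disj: "dom f \<inter> dom g = {} \<Longrightarrow> f \<subseteq>\<^sub>m f ++ g"
  by (metis map_add_comm map_le_map_add)

lemma add_restrict_split: "f \<subseteq>\<^sub>m h \<Longrightarrow> h = f ++ (h |` (- dom f))"
proof (rule ext)
  fix x assume le: "f \<subseteq>\<^sub>m h"
  show "h x = (f ++ h |` (- dom f)) x"
  proof (cases "f x")
    case None then show ?thesis by (cases "h x") (simp_all add: map_add_def restrict_map_def domIff)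
  next
    case (Some y)
    have "h x = Some y" using le Some by (metis domI map_le_def)
    then show ?thesis using Some by (simp add: map_add_def restrict_map_def domI)
  qed
qed

lemma upc_ustar: "upc X \<Longrightarrow> upc Y \<Longrightarrow> upc (ustar X Y)"
  unfolding upc_def ustar_def
proof (intro conjI ballI impI)
  assume X: "X \<subseteq> Heap \<and> (\<forall>h\<in>X. \<forall>h'\<in>Heap. h \<subseteq>\<^sub>m h' \<longrightarrow> h' \<in> X)"
     and Y: "Y \<subseteq> Heap \<and> (\<forall>h\<in>Y. \<forall>h'\<in>Heap. h \<subseteq>\<^sub>m h' \<longrightarrow> h' \<in> Y)"
  show "{f ++ g |f g. f \<in> X \<and> g \<in> Y \<and> dom f \<inter> dom g = {}} \<subseteq> Heap"
    using X Y Heap_add by blast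
  fix h h'
  assume h: "h \<in> {f ++ g |f g. f \<in> X \<and> g \<in> Y \<and> dom f \<inter> dom g = {}}" and h': "h' \<in> Heap" "h \<subseteq>\<^sub>m h'"
  then obtain f g where fg: "h = f ++ g" "f \<in> X" "g \<in> Y" "dom f \<inter> dom g = {}" by blast
  have fh: "f \<subseteq>\<^sub>m h'" using map_le_add_disj[OF fg(4)] fg(1) h'(2) map_le_trans by blast
  have "g \<subseteq>\<^sub>m h'" using fg h'(2) map_le_map_add map_le_trans by blast
  then have gh: "g \<subseteq>\<^sub>m h' |` (- dom f)" using fg(4) unfolding map_le_def
    by (auto simp: restrict_map_def)
  have "h' |` (- dom f) \<in> Y" using Y gh Heap_restrict[OF h'(1)] fg(3) by blast
  moreover have "dom f \<inter> dom (h' |` (- dom f)) = {}" by auto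
  ultimately show "h' \<in> {f ++ g |f g. f \<in> X \<and> g \<in> Y \<and> dom f \<inter> dom g = {}}"
    using add_restrict_split[OF fh] fg(2) by blast
qed

lemma U_upc: "upc (U prim \<eta> \<phi>)"
proof (induction \<phi> arbitrary: \<eta>)
  case (Prim P) then show ?case unfolding upc_def using map_le_trans by fastforce
next
  case (Ex x p) then show ?case unfolding upc_def by simp blast
next
  case (All x p) then show ?case unfolding upc_def by simp blast
next
  case (Star p q) then show ?case using upc_ustar by simp
qed (auto simp: upc_def)

lemma U_Heap: "h \<in> U prim \<eta> \<phi> \<Longrightarrow> h \<in> Heap"
  using U_upc unfolding upc_def by blast

lemma U_up: "h \<in> U prim \<eta> \<phi> \<Longrightarrow> h \<subseteq>\<^sub>m h' \<Longrightarrow> h' \<in> Heap \<Longrightarrow> h' \<in> U prim \<eta> \<phi>"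
  using U_upc unfolding upc_def by blast

definition meet :: "heap list \<Rightarrow> heap" where
  "meet hs = (\<lambda>x. if (\<forall>k<length hs. (hs ! k) x = (hs ! 0) x) then (hs ! 0) x else None)"

lemma meet_le: "k < length hs \<Longrightarrow> meet hs \<subseteq>\<^sub>m hs ! k"
  unfolding meet_def map_le_def by (auto split: if_splits)

lemma le_meet: "0 < length hs \<Longrightarrow> (\<forall>k<length hs. f \<subseteq>\<^sub>m hs ! k) \<Longrightarrow> f \<subseteq>\<^sub>m meet hs"
  unfolding map_le_def
proof
  fix a assume n: "0 < length hs" and le: "\<forall>k<length hs. \<forall>a\<in>dom f. f a = (hs ! k) a" and a: "a \<in> dom f"
  have e: "\<forall>k<length hs. (hs ! k) a = f a" using le a by auto
  then have "(hs ! 0) a = f a" using n by blast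
  then have "\<forall>k<length hs. (hs ! k) a = (hs ! 0) a" using e by simp
  then show "f a = meet hs a" unfolding meet_def using \<open>(hs ! 0) a = f a\<close> by simp
qed

lemma Delta_alt: "Delta n X = {hs. hs \<in> HeapN n \<and> (\<exists>f\<in>X. \<forall>k<n. f \<subseteq>\<^sub>m hs ! k)}"
  unfolding Delta_def HeapN_def by auto

lemma sep_star_Delta:
  assumes n: "0 < n" and X: "upc X" and Y: "upc Y"
  shows "sep_star (Delta n X) (Delta n Y) = Delta n (ustar X Y)"
proof
  show "sep_star (Delta n X) (Delta n Y) \<subseteq> Delta n (ustar X Y)"
  proof
    fix hs assume "hs \<in> sep_star (Delta n X) (Delta n Y)"
    then obtain fs gs where hs: "hs = union_tuple fs gs" "fs \<in> Delta n X" "gs \<in> Delta n Y" "disj_tuple fs gs"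
      unfolding sep_star_def by blast
    then obtain x y where x: "x \<in> X" "\<forall>k<n. x \<subseteq>\<^sub>m fs ! k" and y: "y \<in> Y" "\<forall>k<n. y \<subseteq>\<^sub>m gs ! k"
      and fsN: "fs \<in> HeapN n" and gsN: "gs \<in> HeapN n"
      unfolding Delta_alt by blast
    have len: "length fs = n" "length gs = n" using fsN gsN by (auto simp: HeapN_iff)
    have nth: "\<And>k. k < n \<Longrightarrow> hs ! k = (fs ! k) ++ (gs ! k)"
      using hs(1) len by (simp add: union_tuple_def)
    have dj: "\<And>k. k < n \<Longrightarrow> dom (fs ! k) \<inter> dom (gs ! k) = {}"
      using hs(4) len unfolding disj_tuple_def by auto
    have "dom x \<subseteq> dom (fs ! 0)" using x(2) n map_le_implies_dom_le by blast
    moreover have "dom y \<subseteq> dom (gs ! 0)" using y(2) n map_le_implies_dom_le by blast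
    ultimately have dxy: "dom x \<inter> dom y = {}" using dj[OF n] by blast
    have "hs \<in> HeapN n" using fsN gsN nth len hs(1) by (auto simp: HeapN_iff union_tuple_def Heap_add)
    moreover have "\<forall>k<n. x ++ y \<subseteq>\<^sub>m hs ! k"
    proof (intro allI impI)
      fix k assume k: "k < n"
      show "x ++ y \<subseteq>\<^sub>m hs ! k" using x(2) y(2) dj[OF k] k unfolding nth[OF k]
        by (simp add: map_le_add_mono)
    qed
    ultimately show "hs \<in> Delta n (ustar X Y)" unfolding Delta_alt ustar_def using x(1) y(1) dxy by blast
  qed
next
  show "Delta n (ustar X Y) \<subseteq> sep_star (Delta n X) (Delta n Y)"
  proof
    fix hs assume "hs \<in> Delta n (ustar X Y)"
    then obtain x y where hsN: "hs \<in> HeapN n" and xy: "x \<in> X" "y \<in> Y" "dom x \<inter> dom y = {}"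
      and le: "\<forall>k<n. x ++ y \<subseteq>\<^sub>m hs ! k"
      unfolding Delta_alt ustar_def by blast
    define fs where "fs = map (\<lambda>h. h |` dom x) hs"
    define gs where "gs = map (\<lambda>h. h |` (- dom x)) hs"
    have len: "length hs = n" using hsN by (simp add: HeapN_iff)
    have "union_tuple fs gs = hs"
      unfolding union_tuple_def fs_def gs_def
      by (rule nth_equalityI) (simp_all add: restrict_split)
    moreover have "disj_tuple fs gs" unfolding disj_tuple_def fs_def gs_def by auto
    moreover have "fs \<in> Delta n X"
      unfolding Delta_alt
    proof (intro CollectI conjI bexI allI impI)
      show "fs \<in> HeapN n" using hsN unfolding fs_def HeapN_iff by (auto intro: Heap_restrict)
      fix k assume k: "k < n"
      have "x \<subseteq>\<^sub>m x ++ y" using map_le_add_disj[OF xy(3)] .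
      then have "x \<subseteq>\<^sub>m hs ! k" using le k map_le_trans by blast
      then show "x \<subseteq>\<^sub>m fs ! k" using k len unfolding fs_def map_le_def by (auto simp: restrict_map_def)
    qed (rule xy(1))
    moreover have "gs \<in> Delta n Y"
      unfolding Delta_alt
    proof (intro CollectI conjI bexI allI impI)
      show "gs \<in> HeapN n" using hsN unfolding gs_def HeapN_iff by (auto intro: Heap_restrict)
      fix k assume k: "k < n"
      have "y \<subseteq>\<^sub>m x ++ y" by simp
      then have "y \<subseteq>\<^sub>m hs ! k" using le k map_le_trans by blast
      then show "y \<subseteq>\<^sub>m gs ! k" using k len xy(3) unfolding gs_def map_le_def
        by (auto simp: restrict_map_def)
    qed (rule xy(2))
    ultimately show "hs \<in> sep_star (Delta n X) (Delta n Y)" unfolding sep_star_def by blast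
  qed
qed

lemma sem_Delta:
  assumes "avars \<phi> = {}" "0 < n"
  shows "sem prim n \<eta> \<rho> \<phi> = Delta n (U prim \<eta> \<phi>)"
  using assms
proof (induction \<phi> arbitrary: \<eta>)
  case (Prim P)
  show ?case unfolding Delta_alt
  proof (auto simp: Delta_alt)
    fix x f assume "x \<in> HeapN n" "f \<in> prim P \<eta>" "\<forall>k<n. f \<subseteq>\<^sub>m x ! k"
    then show "\<exists>f. f \<in> Heap \<and> (\<exists>fa\<in>prim P \<eta>. fa \<subseteq>\<^sub>m f) \<and> (\<forall>k<n. f \<subseteq>\<^sub>m x ! k)"
      using Prim.prems(2) by (metis HeapN_iff Heap_le map_le_refl)
  next
    fix x f fa assume "\<forall>k<n. f \<subseteq>\<^sub>m x ! k" "fa \<in> prim P \<eta>" "fa \<subseteq>\<^sub>m f"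
    then show "\<exists>f\<in>prim P \<eta>. \<forall>k<n. f \<subseteq>\<^sub>m x ! k" using map_le_trans by blast
  qed
next
  case ATrue
  show ?case unfolding Delta_alt by (auto simp: HeapN_iff intro!: bexI[of _ Map.empty]) (simp add: Heap_def)
next
  case (Conj p q)
  have "Delta n (U prim \<eta> p) \<inter> Delta n (U prim \<eta> q) = Delta n (U prim \<eta> p \<inter> U prim \<eta> q)"
  proof
    show "Delta n (U prim \<eta> p) \<inter> Delta n (U prim \<eta> q) \<subseteq> Delta n (U prim \<eta> p \<inter> U prim \<eta> q)"
    proof
      fix hs assume "hs \<in> Delta n (U prim \<eta> p) \<inter> Delta n (U prim \<eta> q)"
      then obtain f g where hs: "hs \<in> HeapN n" "f \<in> U prim \<eta> p" "\<forall>k<n. f \<subseteq>\<^sub>m hs ! k"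
        "g \<in> U prim \<eta> q" "\<forall>k<n. g \<subseteq>\<^sub>m hs ! k" unfolding Delta_alt by blast
      have len: "length hs = n" using hs by (simp add: HeapN_iff)
      have m: "meet hs \<in> Heap" using meet_le[of 0 hs] Conj.prems(2) len hs(1) Heap_le by (auto simp: HeapN_iff)
      have "meet hs \<in> U prim \<eta> p" using U_up[OF hs(2) le_meet m] hs(3) len Conj.prems(2) by auto
      moreover have "meet hs \<in> U prim \<eta> q" using U_up[OF hs(4) le_meet m] hs(5) len Conj.prems(2) by auto
      ultimately show "hs \<in> Delta n (U prim \<eta> p \<inter> U prim \<eta> q)"
        unfolding Delta_alt using hs(1) meet_le len by blast
    qed
  qed (auto simp: Delta_alt)
  then show ?case using Conj by simp
next
  case (Disj p q) then show ?case by (auto simp: Delta_alt)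
next
  case (Star p q) then show ?case by (simp add: sep_star_Delta[OF Star.prems(2) U_upc U_upc])
next
  case (Ex x p) then show ?case by (auto simp: Delta_alt)
next
  case (All x p)
  have "HeapN n \<inter> (\<Inter>v. Delta n (U prim (\<eta>(x := v)) p)) = Delta n (Heap \<inter> (\<Inter>v. U prim (\<eta>(x := v)) p))"
  proof
    show "HeapN n \<inter> (\<Inter>v. Delta n (U prim (\<eta>(x := v)) p)) \<subseteq> Delta n (Heap \<inter> (\<Inter>v. U prim (\<eta>(x := v)) p))"
    proof
      fix hs assume hs: "hs \<in> HeapN n \<inter> (\<Inter>v. Delta n (U prim (\<eta>(x := v)) p))"
      have len: "length hs = n" using hs by (simp add: HeapN_iff)
      have m: "meet hs \<in> Heap" using meet_le[of 0 hs] All.prems(2) len hs Heap_le by (auto simp: HeapN_iff)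
      have "\<forall>v. meet hs \<in> U prim (\<eta>(x := v)) p"
      proof
        fix v
        obtain f where "f \<in> U prim (\<eta>(x := v)) p" "\<forall>k<n. f \<subseteq>\<^sub>m hs ! k" using hs unfolding Delta_alt by blast
        then show "meet hs \<in> U prim (\<eta>(x := v)) p" using U_up le_meet m len All.prems(2) by metis
      qed
      then show "hs \<in> Delta n (Heap \<inter> (\<Inter>v. U prim (\<eta>(x := v)) p))"
        unfolding Delta_alt using hs m meet_le len by blast
    qed
  qed (auto simp: Delta_alt)
  then show ?case using All by simp
qed (auto simp: Delta_alt)

lemma sem1_U:
  assumes "avars \<phi> = {}" shows "sem1 prim \<eta> \<phi> = U prim \<eta> \<phi>"
proof -
  have e: "sem prim 1 \<eta> (\<lambda>_. {}) \<phi> = Delta 1 (U prim \<eta> \<phi>)" by (rule sem_Delta[OF assms]) simp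
  show ?thesis unfolding sem1_def e Delta_alt
    by (auto simp: HeapN_iff intro: U_Heap U_up map_le_refl)
qed




lemma union_HeapN: "fs \<in> HeapN n \<Longrightarrow> gs \<in> HeapN n \<Longrightarrow> union_tuple fs gs \<in> HeapN n"
  by (auto simp: HeapN_iff union_tuple_def Heap_add)

lemma union_nth: "k < length fs \<Longrightarrow> k < length gs \<Longrightarrow> union_tuple fs gs ! k = (fs ! k) ++ (gs ! k)"
  by (simp add: union_tuple_def)

lemma sem_HeapN: "(\<forall>a. \<rho> a \<subseteq> HeapN n) \<Longrightarrow> sem prim n \<eta> \<rho> \<phi> \<subseteq> HeapN n"
proof (induction \<phi> arbitrary: \<eta>)
  case (Prim P) then show ?case by (auto simp: Delta_alt)
next
  case (Star p q)
  show ?case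
  proof
    fix hs assume "hs \<in> sem prim n \<eta> \<rho> (Star p q)"
    then obtain fs gs where "hs = union_tuple fs gs" "fs \<in> sem prim n \<eta> \<rho> p" "gs \<in> sem prim n \<eta> \<rho> q"
      unfolding sem.simps sep_star_def by blast
    then show "hs \<in> HeapN n" using Star union_HeapN by blast
  qed
next
  case (Ex x p) then show ?case by auto
next
  case (All x p) then show ?case by auto
qed auto

definition piece :: "heap list \<Rightarrow> (nat \<Rightarrow> int \<Rightarrow> nat) \<Rightarrow> nat \<Rightarrow> heap list" where
  "piece hs col i = map (\<lambda>c. (hs ! c) |` {x. col c x = i}) [0..<length hs]"

lemma piece_len[simp]: "length (piece hs col i) = length hs"
  by (simp add: piece_def)

lemma piece_nth[simp]: "c < length hs \<Longrightarrow> piece hs col i ! c = (hs ! c) |` {x. col c x = i}"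
  by (simp add: piece_def)

lemma piece_HeapN: "hs \<in> HeapN n \<Longrightarrow> piece hs col i \<in> HeapN n"
  by (auto simp: HeapN_iff Heap_restrict)

lemma piece_all: assumes "\<forall>c<length hs. \<forall>x\<in>dom (hs ! c). col c x = i" shows "piece hs col i = hs"
proof (rule nth_equalityI)
  show "length (piece hs col i) = length hs" by simp
  fix c assume "c < length (piece hs col i)"
  then have c: "c < length hs" by simp
  show "piece hs col i ! c = hs ! c"
  proof (rule ext)
    fix x show "(piece hs col i ! c) x = (hs ! c) x"
      using assms c by (cases "x \<in> dom (hs ! c)") (auto simp: restrict_map_def domIff)
  qed
qed

definition SV :: "nat \<Rightarrow> heap list set \<Rightarrow> heap list set list \<Rightarrow> heap list set" where
  "SV n P Qs = {hs. hs \<in> HeapN n \<and> (\<exists>col. (\<forall>c<n. \<forall>x\<in>dom (hs ! c). col c x \<le> length Qs) \<and>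
      piece hs col 0 \<in> P \<and> (\<forall>m<length Qs. piece hs col (Suc m) \<in> Qs ! m))}"

lemma SV_Nil: "P \<subseteq> HeapN n \<Longrightarrow> SV n P [] = P"
proof
  assume P: "P \<subseteq> HeapN n"
  show "SV n P [] \<subseteq> P"
  proof
    fix hs assume "hs \<in> SV n P []"
    then obtain col where hs: "hs \<in> HeapN n" "\<forall>c<n. \<forall>x\<in>dom (hs ! c). col c x \<le> 0" "piece hs col 0 \<in> P"
      unfolding SV_def by auto
    have "piece hs col 0 = hs" using hs(1,2) by (intro piece_all) (auto simp: HeapN_iff)
    then show "hs \<in> P" using hs(3) by simp
  qed
  show "P \<subseteq> SV n P []"
  proof
    fix hs assume hs: "hs \<in> P"
    have "piece hs (\<lambda>_ _. 0) 0 = hs" by (intro piece_all) auto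
    then show "hs \<in> SV n P []" unfolding SV_def using hs P by (auto intro!: exI[of _ "\<lambda>_ _. 0"])
  qed
qed

lemma SV_snoc:
  assumes Q: "Q \<subseteq> HeapN n"
  shows "sep_star (SV n P Qs) Q = SV n P (Qs @ [Q])"
proof
  let ?m = "length Qs"
  show "sep_star (SV n P Qs) Q \<subseteq> SV n P (Qs @ [Q])"
  proof
    fix hs assume "hs \<in> sep_star (SV n P Qs) Q"
    then obtain fs gs where hs: "hs = union_tuple fs gs" "fs \<in> SV n P Qs" "gs \<in> Q" "disj_tuple fs gs"
      unfolding sep_star_def by blast
    then obtain col where fsN: "fs \<in> HeapN n" and col: "\<forall>c<n. \<forall>x\<in>dom (fs ! c). col c x \<le> ?m"
      "piece fs col 0 \<in> P" "\<forall>m<?m. piece fs col (Suc m) \<in> Qs ! m"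
      unfolding SV_def by blast
    have gsN: "gs \<in> HeapN n" using hs(3) Q by blast
    have len: "length fs = n" "length gs = n" using fsN gsN by (auto simp: HeapN_iff)
    have hsN: "hs \<in> HeapN n" using union_HeapN[OF fsN gsN] hs(1) by simp
    have lenh: "length hs = n" using hsN by (simp add: HeapN_iff)
    have nth: "\<And>c. c < n \<Longrightarrow> hs ! c = (fs ! c) ++ (gs ! c)" using hs(1) len by (simp add: union_nth)
    have dj: "\<And>c. c < n \<Longrightarrow> dom (fs ! c) \<inter> dom (gs ! c) = {}"
      using hs(4) len unfolding disj_tuple_def by auto
    define col' where "col' = (\<lambda>c x. if x \<in> dom (fs ! c) then col c x else Suc ?m)"
    have p1: "piece hs col' i = piece fs col i" if i: "i \<le> ?m" for i
    proof (rule nth_equalityI)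
      show "length (piece hs col' i) = length (piece fs col i)" using len lenh by simp
      fix c assume "c < length (piece hs col' i)"
      then have c: "c < n" using lenh by simp
      show "piece hs col' i ! c = piece fs col i ! c"
      proof (rule ext)
        fix x
        show "(piece hs col' i ! c) x = (piece fs col i ! c) x"
        proof (cases "x \<in> dom (fs ! c)")
          case True
          then have "x \<notin> dom (gs ! c)" using dj[OF c] by blast
          then show ?thesis using True c len lenh nth[OF c]
            by (simp add: col'_def restrict_map_def map_add_def domIff)
        next
          case False
          then show ?thesis using c len lenh i by (simp add: col'_def restrict_map_def domIff)
        qed
      qed
    qed
    have p2: "piece hs col' (Suc ?m) = gs"
    proof (rule nth_equalityI)
      show "length (piece hs col' (Suc ?m)) = length gs" using len lenh by simp
      fix c assume "c < length (piece hs col' (Suc ?m))"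
      then have c: "c < n" using lenh by simp
      show "piece hs col' (Suc ?m) ! c = gs ! c"
      proof (rule ext)
        fix x
        show "(piece hs col' (Suc ?m) ! c) x = (gs ! c) x"
        proof (cases "x \<in> dom (fs ! c)")
          case True
          then have "x \<notin> dom (gs ! c)" using dj[OF c] by blast
          moreover have "col c x \<le> ?m" using col(1) c True by blast
          ultimately show ?thesis using True c lenh
            by (simp add: col'_def restrict_map_def domIff)
        next
          case False
          then show ?thesis using c lenh nth[OF c]
            by (simp add: col'_def restrict_map_def domIff map_add_def split: option.split)
        qed
      qed
    qed
    have bnd: "\<forall>c<n. \<forall>x\<in>dom (hs ! c). col' c x \<le> length (Qs @ [Q])"
      using col(1) by (auto simp: col'_def) (meson domI le_Suc_eq)
    have "\<forall>m<length (Qs @ [Q]). piece hs col' (Suc m) \<in> (Qs @ [Q]) ! m"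
    proof (intro allI impI)
      fix m assume "m < length (Qs @ [Q])"
      then consider "m < ?m" | "m = ?m" by fastforce
      then show "piece hs col' (Suc m) \<in> (Qs @ [Q]) ! m"
      proof cases
        case 1 then show ?thesis using p1[of "Suc m"] col(3) by (simp add: nth_append)
      next
        case 2 then show ?thesis using p2 hs(3) by simp
      qed
    qed
    then show "hs \<in> SV n P (Qs @ [Q])" unfolding SV_def using hsN bnd p1[of 0] col(2)
      by (intro CollectI conjI exI[of _ col']) auto
  qed
next
  let ?m = "length Qs"
  show "SV n P (Qs @ [Q]) \<subseteq> sep_star (SV n P Qs) Q"
  proof
    fix hs assume "hs \<in> SV n P (Qs @ [Q])"
    then obtain col where hsN: "hs \<in> HeapN n" and col: "\<forall>c<n. \<forall>x\<in>dom (hs ! c). col c x \<le> Suc ?m"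
      "piece hs col 0 \<in> P" "\<forall>m<Suc ?m. piece hs col (Suc m) \<in> (Qs @ [Q]) ! m"
      unfolding SV_def by auto
    have lenh: "length hs = n" using hsN by (simp add: HeapN_iff)
    define fs where "fs = map (\<lambda>c. (hs ! c) |` {x. col c x \<le> ?m}) [0..<n]"
    define gs where "gs = piece hs col (Suc ?m)"
    have lenf: "length fs = n" "length gs = n" using lenh by (auto simp: fs_def gs_def)
    have fsN: "fs \<in> HeapN n" using hsN unfolding fs_def by (auto simp: HeapN_iff Heap_restrict)
    have pf: "piece fs col i = piece hs col i" if i: "i \<le> ?m" for i
      by (rule nth_equalityI) (use lenf lenh i in \<open>auto simp: fs_def restrict_map_def intro!: ext\<close>)
    have "fs \<in> SV n P Qs" unfolding SV_def
    proof (intro CollectI conjI exI allI impI ballI)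
      show "fs \<in> HeapN n" by (rule fsN)
      fix c x assume c: "c < n" and x: "x \<in> dom (fs ! c)"
      then show "col c x \<le> ?m" by (auto simp: fs_def restrict_map_def split: if_splits)
    next
      show "piece fs col 0 \<in> P" using pf[of 0] col(2) by simp
    next
      fix m assume m: "m < ?m"
      then have "piece hs col (Suc m) \<in> (Qs @ [Q]) ! m" using col(3) by simp
      then show "piece fs col (Suc m) \<in> Qs ! m" using pf[of "Suc m"] m by (simp add: nth_append)
    qed
    moreover have "gs \<in> Q" using col(3)[rule_format, of ?m] by (simp add: gs_def)
    moreover have "disj_tuple fs gs" unfolding disj_tuple_def using lenf lenh
      by (auto simp: fs_def gs_def restrict_map_def split: if_splits)
    moreover have "union_tuple fs gs = hs"
    proof (rule nth_equalityI)
      show "length (union_tuple fs gs) = length hs" using lenf lenh by (simp add: union_tuple_def)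
      fix c assume "c < length (union_tuple fs gs)"
      then have c: "c < n" using lenf by (simp add: union_tuple_def)
      show "union_tuple fs gs ! c = hs ! c"
      proof (rule ext)
        fix x
        show "(union_tuple fs gs ! c) x = (hs ! c) x"
        proof (cases "x \<in> dom (hs ! c)")
          case True
          then have "col c x \<le> Suc ?m" using col(1) c by blast
          then show ?thesis using c lenf lenh
            by (auto simp: union_nth fs_def gs_def restrict_map_def map_add_def split: option.split)
        next
          case False
          then show ?thesis using c lenf lenh
            by (auto simp: union_nth fs_def gs_def restrict_map_def map_add_def domIff split: option.split)
        qed
      qed
    qed
    ultimately show "hs \<in> sep_star (SV n P Qs) Q" unfolding sep_star_def by blast
  qed
qed

lemma sem_star_vars:
  assumes "\<forall>a. \<rho> a \<subseteq> HeapN n"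
  shows "sem prim n \<eta> \<rho> (star_vars \<phi> as) = SV n (sem prim n \<eta> \<rho> \<phi>) (map \<rho> as)"
proof (induction as rule: rev_induct)
  case Nil
  have "SV n (sem prim n \<eta> \<rho> \<phi>) [] = sem prim n \<eta> \<rho> \<phi>" by (rule SV_Nil[OF sem_HeapN[OF assms]])
  then show ?case by (simp add: star_vars_def)
next
  case (snoc a as)
  have "star_vars \<phi> (as @ [a]) = Star (star_vars \<phi> as) (AVar a)" by (simp add: star_vars_def)
  then show ?case using snoc SV_snoc[of "\<rho> a" n] assms by simp
qed

lemma sem_big_conj: "ps \<noteq> [] \<Longrightarrow> sem prim n \<eta> \<rho> (big_conj ps) = (\<Inter>p\<in>set ps. sem prim n \<eta> \<rho> p)"
  by (induction ps rule: big_conj.induct) auto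

lemma sem_big_disj: "sem prim n \<eta> \<rho> (big_disj ps) = (\<Union>p\<in>set ps. sem prim n \<eta> \<rho> p)"
  by (induction ps rule: big_disj.induct) auto




lemma inj_sub:
  assumes "\<forall>c. length (filter (\<lambda>b. b = c) bs) \<le> length (filter (\<lambda>a. a = c) as)"
  shows "\<exists>\<sigma>. inj_on \<sigma> {..<length bs} \<and> (\<forall>m<length bs. \<sigma> m < length as \<and> as ! \<sigma> m = bs ! m)"
proof -
  define A where "A c = {m. m < length bs \<and> bs ! m = c}" for c
  define B where "B c = {k. k < length as \<and> as ! k = c}" for c
  have "\<forall>c. \<exists>g. g ` A c \<subseteq> B c \<and> inj_on g (A c)"
  proof
    fix c
    have "card (A c) \<le> card (B c)" using assms[rule_format, of c] unfolding A_def B_def length_filter_conv_card .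
    then show "\<exists>g. g ` A c \<subseteq> B c \<and> inj_on g (A c)" by (intro card_le_inj) (auto simp: A_def B_def)
  qed
  then obtain g where g: "\<And>c. g c ` A c \<subseteq> B c \<and> inj_on (g c) (A c)" by metis
  define \<sigma> where "\<sigma> m = g (bs ! m) m" for m
  have mem: "\<sigma> m \<in> B (bs ! m)" if "m < length bs" for m
    using g[of "bs ! m"] that unfolding \<sigma>_def A_def by blast
  show ?thesis
  proof (intro exI conjI allI impI)
    show "inj_on \<sigma> {..<length bs}"
    proof (rule inj_onI)
      fix m m' assume m: "m \<in> {..<length bs}" "m' \<in> {..<length bs}" "\<sigma> m = \<sigma> m'"
      have "bs ! m = bs ! m'" using mem[of m] mem[of m'] m unfolding B_def by auto
      then show "m = m'" using g[of "bs ! m"] m unfolding \<sigma>_def A_def inj_on_def by auto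
    qed
    fix m assume "m < length bs"
    then show "\<sigma> m < length as" "as ! \<sigma> m = bs ! m" using mem unfolding B_def by auto
  qed
qed

lemma count_le:
  assumes "inj_on \<sigma> {..<length bs}" "\<forall>m<length bs. \<sigma> m < length as \<and> as ! \<sigma> m = bs ! m"
  shows "length (filter (\<lambda>b. b = c) bs) \<le> length (filter (\<lambda>a. a = c) as)"
  unfolding length_filter_conv_card
proof (rule card_inj_on_le)
  show "inj_on \<sigma> {m. m < length bs \<and> bs ! m = c}" using assms(1) by (rule inj_on_subset) auto
  show "\<sigma> ` {m. m < length bs \<and> bs ! m = c} \<subseteq> {k. k < length as \<and> as ! k = c}" using assms(2) by auto
  show "finite {k. k < length as \<and> as ! k = c}" by simp
qed

lemma le_tuple_refl: "le_tuple gs gs"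
  by (simp add: le_tuple_def)

lemma le_tuple_trans: "le_tuple fs gs \<Longrightarrow> le_tuple gs hs \<Longrightarrow> le_tuple fs hs"
  unfolding le_tuple_def using map_le_trans by metis

lemma le_tuple_nth: "le_tuple gs hs \<Longrightarrow> k < length hs \<Longrightarrow> gs ! k \<subseteq>\<^sub>m hs ! k"
  by (simp add: le_tuple_def)

lemma restrict_le: "h |` A \<subseteq>\<^sub>m h"
  by (auto simp: map_le_def restrict_map_def)

lemma restrict_mono: "A \<subseteq> B \<Longrightarrow> h |` A \<subseteq>\<^sub>m h |` B"
  by (auto simp: map_le_def restrict_map_def)

lemma piece_cong:
  assumes "\<And>c x. c < length hs \<Longrightarrow> (col c x = i) = (col' c x = i')"
  shows "piece hs col i = piece hs col' i'"
proof -
  have "\<And>c. c \<in> set [0..<length hs] \<Longrightarrow> {x. col c x = i} = {x. col' c x = i'}" using assms by auto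
  then show ?thesis unfolding piece_def by (intro map_cong) auto
qed

lemma lhs_iff: "L \<noteq> [] \<Longrightarrow> hs \<in> sem prim n \<eta> \<rho> (canon_lhs L) \<longleftrightarrow>
   (\<forall>i<length L. hs \<in> sem prim n \<eta> \<rho> (star_vars (fst (L ! i)) (snd (L ! i))))"
  unfolding canon_lhs_def by (simp add: sem_big_conj all_set_conv_all_nth case_prod_beta)

lemma rhs_iff: "hs \<in> sem prim n \<eta> \<rho> (canon_rhs R) \<longleftrightarrow>
   (\<exists>j<length R. hs \<in> sem prim n \<eta> \<rho> (star_vars (fst (R ! j)) (snd (R ! j))))"
  unfolding canon_rhs_def by (auto simp: sem_big_disj in_set_conv_nth case_prod_beta) (metis fst_conv snd_conv, metis nth_mem)

lemma canonical_facts: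
  assumes "canonical L R"
  shows "L \<noteq> []" "\<And>i. i < length L \<Longrightarrow> avars (fst (L ! i)) = {}"
    "\<And>j. j < length R \<Longrightarrow> avars (fst (R ! j)) = {}"
    "\<And>j. j < length R \<Longrightarrow> set (snd (R ! j)) \<subseteq> Vset L"
  using assms unfolding canonical_def Vset_def
  by (auto simp: case_prod_beta dest!: nth_mem)




lemma pc_valid:
  assumes can: "canonical L R" and pc: "parametricity_condition prim \<eta> L R"
    and n: "1 \<le> n"
  shows "valid_n prim n \<eta> (canon_lhs L) (canon_rhs R)"
  unfolding valid_n_def
proof (intro allI impI subsetI)
  fix \<rho> hs
  assume rho: "\<forall>a. \<rho> a \<in> IRel n" and hs: "hs \<in> sem prim n \<eta> \<rho> (canon_lhs L)"
  let ?M = "length L"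
  note cf = canonical_facts[OF can]
  have rhoN: "\<forall>a. \<rho> a \<subseteq> HeapN n" using rho unfolding IRel_def by blast
  have n0: "0 < n" using n by simp
  have hsN: "hs \<in> HeapN n" using hs sem_HeapN[OF rhoN] by blast
  have len: "length hs = n" using hsN by (simp add: HeapN_iff)
  define Q where "Q i col f = ((\<forall>c<n. \<forall>x\<in>dom (hs ! c). col c x \<le> length (snd (L ! i))) \<and>
     f \<in> U prim \<eta> (fst (L ! i)) \<and> (\<forall>k<n. f \<subseteq>\<^sub>m piece hs col 0 ! k) \<and>
     (\<forall>m<length (snd (L ! i)). piece hs col (Suc m) \<in> \<rho> (snd (L ! i) ! m)))" for i col f
  have "\<forall>i. \<exists>p. i < ?M \<longrightarrow> Q i (fst p) (snd p)"
  proof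
    fix i
    show "\<exists>p. i < ?M \<longrightarrow> Q i (fst p) (snd p)"
    proof (cases "i < ?M")
      case True
      then have "hs \<in> sem prim n \<eta> \<rho> (star_vars (fst (L ! i)) (snd (L ! i)))"
        using hs lhs_iff[OF cf(1)] by blast
      then have "hs \<in> SV n (Delta n (U prim \<eta> (fst (L ! i)))) (map \<rho> (snd (L ! i)))"
        by (simp add: sem_star_vars[OF rhoN] sem_Delta[OF cf(2)[OF True] n0])
      then obtain col f where "Q i col f" unfolding SV_def Delta_alt Q_def by auto
      then show ?thesis by (intro exI[of _ "(col, f)"]) simp
    qed simp
  qed
  then obtain G where G: "\<And>i. i < ?M \<Longrightarrow> Q i (fst (G i)) (snd (G i))" using choice by metis
  define F where "F i = snd (G i)" for i
  define COL where "COL i = fst (G i)" for i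
  have Q: "\<And>i. i < ?M \<Longrightarrow> Q i (COL i) (F i)" using G unfolding F_def COL_def by blast
  define h where "h = meet hs"
  have hHeap: "h \<in> Heap" unfolding h_def using meet_le[of 0 hs] n0 len hsN Heap_le by (auto simp: HeapN_iff)
  have hle: "\<And>k. k < n \<Longrightarrow> h \<subseteq>\<^sub>m hs ! k" unfolding h_def using meet_le len by simp
  have Fk: "\<And>i k. i < ?M \<Longrightarrow> k < n \<Longrightarrow> F i \<subseteq>\<^sub>m hs ! k"
  proof -
    fix i k assume i: "i < ?M" and k: "k < n"
    have "F i \<subseteq>\<^sub>m piece hs (COL i) 0 ! k" using Q[OF i] k unfolding Q_def by blast
    also have "\<dots> \<subseteq>\<^sub>m hs ! k" using k len by (simp add: restrict_le)
    finally show "F i \<subseteq>\<^sub>m hs ! k" .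
  qed
  have Fh: "\<And>i. i < ?M \<Longrightarrow> F i \<subseteq>\<^sub>m h" unfolding h_def using le_meet Fk len n0 by metis
  have FU: "\<And>i. i < ?M \<Longrightarrow> F i \<in> U prim \<eta> (fst (L ! i))" using Q unfolding Q_def by blast
  have pre: "\<forall>i<?M. map F [0..<?M] ! i \<in> Heap \<and> map F [0..<?M] ! i \<subseteq>\<^sub>m h \<and>
      map F [0..<?M] ! i \<in> sem1 prim \<eta> (fst (L ! i))"
    using FU Fh U_Heap[OF FU] sem1_U[OF cf(2)] by simp
  have lenF: "length (map F [0..<?M]) = ?M" by simp
  from pc[unfolded parametricity_condition_def, rule_format, OF hHeap lenF pre[rule_format]]
  have disj: "(\<exists>i<?M. \<exists>j<length R. F i \<in> sem1 prim \<eta> (fst (R ! j)) \<and> Pi_ge_Omega L R i j) \<or>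
     (\<exists>j<length R. snd (R ! j) = [] \<and> h \<in> sem1 prim \<eta> (fst (R ! j)))" by auto
  show "hs \<in> sem prim n \<eta> \<rho> (canon_rhs R)"
    unfolding rhs_iff
  proof -
    from disj show "\<exists>j<length R. hs \<in> sem prim n \<eta> \<rho> (star_vars (fst (R ! j)) (snd (R ! j)))"
    proof
      assume "\<exists>j<length R. snd (R ! j) = [] \<and> h \<in> sem1 prim \<eta> (fst (R ! j))"
      then obtain j where j: "j < length R" "snd (R ! j) = []" "h \<in> sem1 prim \<eta> (fst (R ! j))" by blast
      have "hs \<in> Delta n (U prim \<eta> (fst (R ! j)))"
        unfolding Delta_alt using hsN hle j(3) sem1_U[OF cf(3)[OF j(1)]] by blast
      then have "hs \<in> sem prim n \<eta> \<rho> (star_vars (fst (R ! j)) (snd (R ! j)))"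
        using j(2) by (simp add: star_vars_def sem_Delta[OF cf(3)[OF j(1)] n0])
      then show ?thesis using j(1) by blast
    next
      assume "\<exists>i<?M. \<exists>j<length R. F i \<in> sem1 prim \<eta> (fst (R ! j)) \<and> Pi_ge_Omega L R i j"
      then obtain i j where i: "i < ?M" and j: "j < length R" and Fi: "F i \<in> sem1 prim \<eta> (fst (R ! j))"
        and PO: "Pi_ge_Omega L R i j" by blast
      define as where "as = snd (L ! i)"
      define bs where "bs = snd (R ! j)"
      define N where "N = length bs"
      have cnt: "\<forall>c. length (filter (\<lambda>b. b = c) bs) \<le> length (filter (\<lambda>a. a = c) as)"
      proof
        fix c
        show "length (filter (\<lambda>b. b = c) bs) \<le> length (filter (\<lambda>a. a = c) as)"
        proof (cases "c \<in> Vset L")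
          case True
          then show ?thesis using PO unfolding Pi_ge_Omega_def Pi_def Omega_def as_def bs_def by blast
        next
          case False
          then have "c \<notin> set bs" using cf(4)[OF j] unfolding bs_def by blast
          then have "filter (\<lambda>b. b = c) bs = []" by (auto simp: filter_empty_conv)
          then show ?thesis by simp
        qed
      qed
      obtain \<sigma> where \<sigma>: "inj_on \<sigma> {..<N}" "\<And>m. m < N \<Longrightarrow> \<sigma> m < length as \<and> as ! \<sigma> m = bs ! m"
        using inj_sub[OF cnt] unfolding N_def by blast
      define col' where "col' c x = (if 1 \<le> COL i c x \<and> COL i c x - 1 \<in> \<sigma> ` {..<N}
          then Suc (inv_into {..<N} \<sigma> (COL i c x - 1)) else 0)" for c x
      have ceq: "(col' c x = Suc m) = (COL i c x = Suc (\<sigma> m))" if m: "m < N" for c x m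
      proof
        assume a: "col' c x = Suc m"
        then have c1: "1 \<le> COL i c x \<and> COL i c x - 1 \<in> \<sigma> ` {..<N}" unfolding col'_def by (auto split: if_splits)
        then have "inv_into {..<N} \<sigma> (COL i c x - 1) = m" using a unfolding col'_def by simp
        then have "\<sigma> m = COL i c x - 1" using f_inv_into_f[of "COL i c x - 1" \<sigma> "{..<N}"] c1 by simp
        then show "COL i c x = Suc (\<sigma> m)" using c1 by simp
      next
        assume "COL i c x = Suc (\<sigma> m)"
        then show "col' c x = Suc m" unfolding col'_def using m \<sigma>(1) by simp
      qed
      have c0: "COL i c x = 0 \<Longrightarrow> col' c x = 0" for c x unfolding col'_def by simp
      have QQ: "Q i (COL i) (F i)" using Q[OF i] .
      have "hs \<in> SV n (Delta n (U prim \<eta> (fst (R ! j)))) (map \<rho> bs)"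
        unfolding SV_def
      proof (intro CollectI conjI exI[of _ col'] allI impI ballI)
        show "hs \<in> HeapN n" by (rule hsN)
      next
        fix c x assume "c < n" "x \<in> dom (hs ! c)"
        show "col' c x \<le> length (map \<rho> bs)"
          unfolding col'_def
          using inv_into_into[of _ \<sigma> "{..<N}"] by (auto simp: Suc_le_eq N_def)
      next
        show "piece hs col' 0 \<in> Delta n (U prim \<eta> (fst (R ! j)))"
          unfolding Delta_alt
        proof (intro CollectI conjI bexI allI impI)
          show "piece hs col' 0 \<in> HeapN n" using piece_HeapN[OF hsN] .
          show "F i \<in> U prim \<eta> (fst (R ! j))" using Fi sem1_U[OF cf(3)[OF j]] by simp
          fix k assume k: "k < n"
          have "F i \<subseteq>\<^sub>m piece hs (COL i) 0 ! k" using QQ k unfolding Q_def by blast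
          also have "\<dots> \<subseteq>\<^sub>m piece hs col' 0 ! k" using k len c0 by (simp add: restrict_mono subset_eq)
          finally show "F i \<subseteq>\<^sub>m piece hs col' 0 ! k" .
        qed
      next
        fix m assume "m < length (map \<rho> bs)"
        then have m: "m < N" by (simp add: N_def)
        have "piece hs col' (Suc m) = piece hs (COL i) (Suc (\<sigma> m))" by (rule piece_cong) (rule ceq[OF m])
        moreover have "piece hs (COL i) (Suc (\<sigma> m)) \<in> \<rho> (as ! \<sigma> m)" using QQ \<sigma>(2)[OF m] unfolding Q_def as_def by blast
        ultimately show "piece hs col' (Suc m) \<in> map \<rho> bs ! m" using \<sigma>(2)[OF m] m by (simp add: N_def)
      qed
      then have "hs \<in> sem prim n \<eta> \<rho> (star_vars (fst (R ! j)) (snd (R ! j)))"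
        unfolding bs_def by (simp add: sem_star_vars[OF rhoN] sem_Delta[OF cf(3)[OF j] n0])
      then show ?thesis using j by blast
    qed
  qed
qed




lemma valid_pc:
  assumes can: "canonical L R"
    and val: "\<forall>n\<ge>1. valid_n prim n \<eta> (canon_lhs L) (canon_rhs R)"
  shows "parametricity_condition prim \<eta> L R"
  unfolding parametricity_condition_def
proof (intro allI impI)
  fix h hsL
  assume hH: "h \<in> Heap" and lenL: "length hsL = length L"
    and hyp: "\<forall>i<length L. hsL ! i \<in> Heap \<and> hsL ! i \<subseteq>\<^sub>m h \<and> hsL ! i \<in> sem1 prim \<eta> (fst (L ! i))"
  let ?M = "length L"
  note cf = canonical_facts[OF can]
  show "(\<exists>i<?M. \<exists>j<length R. hsL ! i \<in> sem1 prim \<eta> (fst (R ! j)) \<and> Pi_ge_Omega L R i j) \<or>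
        (\<exists>j<length R. snd (R ! j) = [] \<and> h \<in> sem1 prim \<eta> (fst (R ! j)))"
  proof (rule ccontr)
    assume neg: "\<not> ((\<exists>i<?M. \<exists>j<length R. hsL ! i \<in> sem1 prim \<eta> (fst (R ! j)) \<and> Pi_ge_Omega L R i j) \<or>
        (\<exists>j<length R. snd (R ! j) = [] \<and> h \<in> sem1 prim \<eta> (fst (R ! j))))"
    define Mi where "Mi i = length (snd (L ! i))" for i
    define n where "n = 2 + (\<Sum>i<?M. Mi i)"
    have Mi_n: "\<And>i. i < ?M \<Longrightarrow> Mi i < n"
    proof -
      fix i assume "i < ?M"
      then have "Mi i \<le> (\<Sum>i<?M. Mi i)" by (intro member_le_sum) auto
      then show "Mi i < n" unfolding n_def by simp
    qed
    have n2: "2 \<le> n" unfolding n_def by simp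
    have n0: "0 < n" using n2 by simp
    have finh: "finite (dom h)" using hH unfolding Heap_def by blast
    have posh: "\<And>x. x \<in> dom h \<Longrightarrow> 0 < x" using hH unfolding Heap_def by blast
    define B :: int where "B = Max (insert 0 (dom h)) + 1"
    have B0: "0 < B" unfolding B_def using Max_ge[of "insert 0 (dom h)" 0] finh by simp
    have hB: "x < B" if x: "x \<in> dom h" for x
    proof -
      have "x \<le> Max (insert 0 (dom h))" by (rule Max_ge) (use finh x in auto)
      then show ?thesis unfolding B_def by simp
    qed
    define valid where "valid t = (case t of (i1, k1, i2, k2) \<Rightarrow> i1 < ?M \<and> k1 < Mi i1 \<and> i2 < ?M \<and> k2 < Mi i2 \<and>
       ((i1, k1) = (i2, k2) \<or> i1 \<noteq> i2))" for t :: "nat \<times> nat \<times> nat \<times> nat"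
    define enc where "enc t = (case t of (i1, k1, i2, k2) \<Rightarrow> prod_encode (prod_encode (i1, k1), prod_encode (i2, k2)))"
      for t :: "nat \<times> nat \<times> nat \<times> nat"
    define dec where "dec x = (case prod_decode (nat (x - B)) of (p1, p2) \<Rightarrow>
       (fst (prod_decode p1), snd (prod_decode p1), fst (prod_decode p2), snd (prod_decode p2)))" for x :: int
    define loc where "loc t = B + int (enc t)" for t
    define TL where "TL = loc ` {t. valid t}"
    have dec_loc: "dec (loc (i1, k1, i2, k2)) = (i1, k1, i2, k2)" for i1 k1 i2 k2
      by (simp add: dec_def loc_def enc_def)
    have locB: "B \<le> loc t" for t by (simp add: loc_def)
    have "{t. valid t} \<subseteq> {..<?M} \<times> {..<n} \<times> {..<?M} \<times> {..<n}"
    proof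
      fix t assume "t \<in> {t. valid t}"
      moreover obtain i1 k1 i2 k2 where t: "t = (i1, k1, i2, k2)" by (metis prod_cases4)
      ultimately show "t \<in> {..<?M} \<times> {..<n} \<times> {..<?M} \<times> {..<n}"
        using Mi_n[of i1] Mi_n[of i2] unfolding valid_def by auto
    qed
    then have TL_fin: "finite TL" unfolding TL_def by (meson finite_SigmaI finite_lessThan finite_subset finite_imageI)
    have TL_dom: "x \<notin> dom h" if xT: "x \<in> TL" for x
    proof
      assume xh: "x \<in> dom h"
      from xT obtain t where "x = loc t" unfolding TL_def by blast
      then show False using locB[of t] hB[OF xh] by simp
    qed
    have TL_pos: "0 < x" if xT: "x \<in> TL" for x
    proof -
      from xT obtain t where "x = loc t" unfolding TL_def by blast
      then show ?thesis using locB[of t] B0 by simp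
    qed
    define hsc where "hsc c = (\<lambda>x. if x \<in> dom h then h x else if x \<in> TL then Some (int c) else None)" for c :: nat
    define hs where "hs = map hsc [0..<n]"
    have lenhs: "length hs = n" by (simp add: hs_def)
    have hs_nth: "\<And>c. c < n \<Longrightarrow> hs ! c = hsc c" by (simp add: hs_def)
    have dom_hsc: "dom (hsc c) = dom h \<union> TL" for c by (auto simp: hsc_def split: if_splits)
    have hsc_h: "\<And>c x. x \<in> dom h \<Longrightarrow> hsc c x = h x" by (simp add: hsc_def)
    have hsc_T: "\<And>c x. x \<in> TL \<Longrightarrow> hsc c x = Some (int c)" using TL_dom by (simp add: hsc_def)
    have hscH: "hsc c \<in> Heap" for c unfolding Heap_def mem_Collect_eq dom_hsc using finh TL_fin posh TL_pos by auto
    have hsN: "hs \<in> HeapN n" using hscH by (simp add: HeapN_iff lenhs hs_nth)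
    define col where "col i c x = (if x \<in> dom h then (if x \<notin> dom (hsL ! i) \<and> 0 < Mi i then Suc (min c (Mi i - 1)) else 0)
        else if x \<in> TL then (case dec x of (i1, k1, i2, k2) \<Rightarrow> if i1 = i then Suc k1 else if i2 = i then Suc k2 else 0)
        else 0)" for i c x
    define A where "A i k = piece hs (col i) (Suc k)" for i k
    define \<rho> where "\<rho> a = {gs \<in> HeapN n. \<exists>i<?M. \<exists>k<Mi i. snd (L ! i) ! k = a \<and> le_tuple (A i k) gs}" for a
    have rhoI: "\<forall>a. \<rho> a \<in> IRel n" unfolding IRel_def \<rho>_def using le_tuple_trans by blast
    have rhoN: "\<forall>a. \<rho> a \<subseteq> HeapN n" unfolding \<rho>_def by blast
    have tok: "loc (i1, k1, i2, k2) \<in> dom (A i k ! 0)"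
      if tv: "valid (i1, k1, i2, k2)" and ii: "i < ?M" "k < Mi i" and eq: "(i1, k1) = (i, k) \<or> (i2, k2) = (i, k)"
      for i k i1 k1 i2 k2
    proof -
      let ?x = "loc (i1, k1, i2, k2)"
      have xT: "?x \<in> TL" using tv unfolding TL_def by blast
      have xh: "?x \<notin> dom h" using TL_dom xT by blast
      have "col i 0 ?x = Suc k" using tv eq xh xT unfolding col_def valid_def by (auto simp: dec_loc)
      then show ?thesis unfolding A_def using xT n0 lenhs by (simp add: hs_nth hsc_T domIff restrict_map_def)
    qed
    have inL: "hs \<in> sem prim n \<eta> \<rho> (canon_lhs L)"
      unfolding lhs_iff[OF cf(1)]
    proof (intro allI impI)
      fix i assume i: "i < ?M"
      have hi: "hsL ! i \<in> Heap" "hsL ! i \<subseteq>\<^sub>m h" "hsL ! i \<in> U prim \<eta> (fst (L ! i))"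
        using hyp i sem1_U[OF cf(2)[OF i]] by auto
      have "hs \<in> SV n (Delta n (U prim \<eta> (fst (L ! i)))) (map \<rho> (snd (L ! i)))"
        unfolding SV_def
      proof (intro CollectI conjI exI[of _ "col i"] allI impI ballI)
        show "hs \<in> HeapN n" by (rule hsN)
      next
        fix c x assume c: "c < n" and x: "x \<in> dom (hs ! c)"
        show "col i c x \<le> length (map \<rho> (snd (L ! i)))"
        proof (cases "x \<in> dom h")
          case True
          have "0 < Mi i \<Longrightarrow> Suc (min c (Mi i - 1)) \<le> Mi i" by linarith
          then show ?thesis using True unfolding col_def by (auto simp: Mi_def)
        next
          case False
          then have xT: "x \<in> TL" using x c dom_hsc hs_nth by auto
          then obtain i1 k1 i2 k2 where x': "x = loc (i1, k1, i2, k2)" "valid (i1, k1, i2, k2)"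
            unfolding TL_def by (metis imageE mem_Collect_eq prod_cases4)
          show ?thesis using False xT x'(2) unfolding col_def x'(1) valid_def by (auto simp: dec_loc Mi_def)
        qed
      next
        show "piece hs (col i) 0 \<in> Delta n (U prim \<eta> (fst (L ! i)))"
          unfolding Delta_alt
        proof (intro CollectI conjI bexI allI impI)
          show "piece hs (col i) 0 \<in> HeapN n" using piece_HeapN[OF hsN] .
          show "hsL ! i \<in> U prim \<eta> (fst (L ! i))" by (rule hi(3))
          fix k assume k: "k < n"
          show "hsL ! i \<subseteq>\<^sub>m piece hs (col i) 0 ! k"
            unfolding map_le_def
          proof
            fix x assume x: "x \<in> dom (hsL ! i)"
            then have xh: "x \<in> dom h" using hi(2) map_le_implies_dom_le by blast
            have "(hsL ! i) x = h x" using hi(2) x unfolding map_le_def by blast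
            then show "(hsL ! i) x = (piece hs (col i) 0 ! k) x"
              using k lenhs xh x by (simp add: hs_nth hsc_h col_def restrict_map_def)
          qed
        qed
      next
        fix m assume "m < length (map \<rho> (snd (L ! i)))"
        then have m: "m < Mi i" by (simp add: Mi_def)
        have "piece hs (col i) (Suc m) \<in> \<rho> (snd (L ! i) ! m)"
          unfolding \<rho>_def A_def using piece_HeapN[OF hsN] i m le_tuple_refl by blast
        then show "piece hs (col i) (Suc m) \<in> map \<rho> (snd (L ! i)) ! m" using m by (simp add: Mi_def)
      qed
      then show "hs \<in> sem prim n \<eta> \<rho> (star_vars (fst (L ! i)) (snd (L ! i)))"
        by (simp add: sem_star_vars[OF rhoN] sem_Delta[OF cf(2)[OF i] n0])
    qed
    have "valid_n prim n \<eta> (canon_lhs L) (canon_rhs R)" using val n2 by simp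
    then have "hs \<in> sem prim n \<eta> \<rho> (canon_rhs R)" using inL rhoI unfolding valid_n_def by blast
    then obtain j where j: "j < length R"
      and hsj0: "hs \<in> sem prim n \<eta> \<rho> (star_vars (fst (R ! j)) (snd (R ! j)))"
      unfolding rhs_iff by blast
    define bs where "bs = snd (R ! j)"
    define N where "N = length bs"
    have hsj: "hs \<in> SV n (Delta n (U prim \<eta> (fst (R ! j)))) (map \<rho> bs)"
      using hsj0 unfolding bs_def by (simp add: sem_star_vars[OF rhoN] sem_Delta[OF cf(3)[OF j] n0])
    have fdom: "x \<in> dom h" if f0: "f \<subseteq>\<^sub>m hs ! 0" and f1: "f \<subseteq>\<^sub>m hs ! 1" and x: "x \<in> dom f" for f x
    proof (rule ccontr)
      assume xh: "x \<notin> dom h"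
      have "f x = hsc 0 x" "f x = hsc 1 x" using f0 f1 x n2 hs_nth unfolding map_le_def by auto
      then show False using xh x hsc_T by (cases "x \<in> TL") (auto simp: hsc_def)
    qed
    show False
    proof (cases "bs = []")
      case True
      have DH: "Delta n (U prim \<eta> (fst (R ! j))) \<subseteq> HeapN n" by (auto simp: Delta_alt)
      have "hs \<in> Delta n (U prim \<eta> (fst (R ! j)))" using hsj SV_Nil[OF DH] True by simp
      then obtain f where f: "f \<in> U prim \<eta> (fst (R ! j))" "\<forall>k<n. f \<subseteq>\<^sub>m hs ! k" unfolding Delta_alt by blast
      have "f \<subseteq>\<^sub>m h"
        unfolding map_le_def
      proof
        fix x assume x: "x \<in> dom f"
        have xh: "x \<in> dom h" using fdom[OF _ _ x] f(2) n2 by simp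
        have "f x = (hs ! 0) x" using f(2) x n0 unfolding map_le_def by blast
        then show "f x = h x" using xh n0 by (simp add: hs_nth hsc_h)
      qed
      then have "h \<in> U prim \<eta> (fst (R ! j))" using U_up f(1) hH by blast
      then show False using neg j True sem1_U[OF cf(3)[OF j]] unfolding bs_def by auto
    next
      case False
      then have N0: "0 < N" unfolding N_def by simp
      obtain cl where cl: "\<forall>c<n. \<forall>x\<in>dom (hs ! c). cl c x \<le> length (map \<rho> bs)"
        "piece hs cl 0 \<in> Delta n (U prim \<eta> (fst (R ! j)))"
        "\<forall>m<length (map \<rho> bs). piece hs cl (Suc m) \<in> map \<rho> bs ! m"
        using hsj unfolding SV_def by blast
      have "\<forall>m. \<exists>p. m < N \<longrightarrow> (fst p < ?M \<and> snd p < Mi (fst p) \<and> snd (L ! fst p) ! snd p = bs ! m \<and>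
          le_tuple (A (fst p) (snd p)) (piece hs cl (Suc m)))"
      proof
        fix m
        show "\<exists>p. m < N \<longrightarrow> (fst p < ?M \<and> snd p < Mi (fst p) \<and> snd (L ! fst p) ! snd p = bs ! m \<and>
          le_tuple (A (fst p) (snd p)) (piece hs cl (Suc m)))"
        proof (cases "m < N")
          case True
          then have "piece hs cl (Suc m) \<in> \<rho> (bs ! m)" using cl(3) unfolding N_def by simp
          then obtain i k where "i < ?M" "k < Mi i" "snd (L ! i) ! k = bs ! m" "le_tuple (A i k) (piece hs cl (Suc m))"
            unfolding \<rho>_def by blast
          then show ?thesis by (intro exI[of _ "(i, k)"]) simp
        qed simp
      qed
      then obtain IK where IK: "\<And>m. m < N \<Longrightarrow> fst (IK m) < ?M \<and> snd (IK m) < Mi (fst (IK m)) \<and>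
          snd (L ! fst (IK m)) ! snd (IK m) = bs ! m \<and> le_tuple (A (fst (IK m)) (snd (IK m))) (piece hs cl (Suc m))"
        using choice by metis
      define I where "I m = fst (IK m)" for m
      define K where "K m = snd (IK m)" for m
      have IK': "\<And>m. m < N \<Longrightarrow> I m < ?M \<and> K m < Mi (I m) \<and> snd (L ! I m) ! K m = bs ! m \<and>
          le_tuple (A (I m) (K m)) (piece hs cl (Suc m))" using IK unfolding I_def K_def by blast
      have dj: "dom (piece hs cl (Suc m) ! 0) \<inter> dom (piece hs cl (Suc m') ! 0) = {}" if "m \<noteq> m'" for m m'
        using that n0 lenhs by (auto simp: restrict_map_def split: if_splits)
      have sub: "dom (A (I m) (K m) ! 0) \<subseteq> dom (piece hs cl (Suc m) ! 0)" if "m < N" for m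
      proof -
        have "A (I m) (K m) ! 0 \<subseteq>\<^sub>m piece hs cl (Suc m) ! 0"
          by (rule le_tuple_nth) (use IK'[OF that] n0 lenhs in auto)
        then show ?thesis by (rule map_le_implies_dom_le)
      qed
      have claim: "I m = I m' \<and> K m \<noteq> K m'" if m: "m < N" "m' < N" "m \<noteq> m'" for m m'
      proof (rule ccontr)
        assume nc: "\<not> (I m = I m' \<and> K m \<noteq> K m')"
        show False
        proof (cases "I m = I m'")
          case True
          then have KK: "K m = K m'" using nc by blast
          have v: "valid (I m, K m, I m, K m)" using IK'[OF m(1)] unfolding valid_def by simp
          have "loc (I m, K m, I m, K m) \<in> dom (A (I m) (K m) ! 0)"
            using tok[OF v] IK'[OF m(1)] by simp
          then show False using sub[OF m(1)] sub[OF m(2)] True KK dj[OF m(3)] by auto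
        next
          case False
          have v: "valid (I m, K m, I m', K m')" using IK'[OF m(1)] IK'[OF m(2)] False unfolding valid_def by simp
          have "loc (I m, K m, I m', K m') \<in> dom (A (I m) (K m) ! 0)"
            using tok[OF v] IK'[OF m(1)] by simp
          moreover have "loc (I m, K m, I m', K m') \<in> dom (A (I m') (K m') ! 0)"
            using tok[OF v] IK'[OF m(2)] by simp
          ultimately show False using sub[OF m(1)] sub[OF m(2)] dj[OF m(3)] by auto
        qed
      qed
      define i where "i = I 0"
      have Ii: "\<And>m. m < N \<Longrightarrow> I m = i" unfolding i_def using claim N0 by metis
      have i: "i < ?M" using IK'[OF N0] unfolding i_def by blast
      have injK: "inj_on K {..<N}" unfolding inj_on_def using claim by blast
      have \<sigma>: "\<forall>m<N. K m < length (snd (L ! i)) \<and> snd (L ! i) ! K m = bs ! m"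
        using IK' Ii unfolding Mi_def by metis
      have PO: "Pi_ge_Omega L R i j"
        unfolding Pi_ge_Omega_def Pi_def Omega_def
        using count_le[OF injK[unfolded N_def] \<sigma>[unfolded N_def]] unfolding bs_def by blast
      obtain f where f: "f \<in> U prim \<eta> (fst (R ! j))" "\<forall>c<n. f \<subseteq>\<^sub>m piece hs cl 0 ! c"
        using cl(2) unfolding Delta_alt by blast
      have fc: "\<And>c. c < n \<Longrightarrow> f \<subseteq>\<^sub>m hs ! c" using f(2) lenhs restrict_le map_le_trans by fastforce
      have hi: "hsL ! i \<in> Heap" "hsL ! i \<subseteq>\<^sub>m h" using hyp i by auto
      have "f \<subseteq>\<^sub>m hsL ! i"
        unfolding map_le_def
      proof
        fix x assume x: "x \<in> dom f"
        have xh: "x \<in> dom h" using fdom[OF fc fc x] n2 by simp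
        have col0: "cl c x = 0" if c: "c < n" for c
        proof -
          have "x \<in> dom (piece hs cl 0 ! c)" using f(2) c x map_le_implies_dom_le by blast
          then show ?thesis using c lenhs by (auto simp: restrict_map_def domIff split: if_splits)
        qed
        have xi: "x \<in> dom (hsL ! i)"
        proof (rule ccontr)
          assume xni: "x \<notin> dom (hsL ! i)"
          define c0 where "c0 = K 0"
          have c0M: "c0 < Mi i" using IK'[OF N0] Ii[OF N0] unfolding c0_def by simp
          have c0n: "c0 < n" using Mi_n[OF i] c0M by simp
          have "col i c0 x = Suc c0" using xh xni c0M unfolding col_def by simp
          then have "x \<in> dom (A i c0 ! c0)" unfolding A_def using c0n lenhs xh
            by (simp add: hs_nth hsc_h restrict_map_def domIff)
          moreover have "A i c0 ! c0 \<subseteq>\<^sub>m piece hs cl (Suc 0) ! c0"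
            using le_tuple_nth[of "A i c0" "piece hs cl (Suc 0)" c0] IK'[OF N0] Ii[OF N0] c0n lenhs
            unfolding c0_def by simp
          ultimately have "x \<in> dom (piece hs cl (Suc 0) ! c0)" using map_le_implies_dom_le by blast
          then have "cl c0 x = Suc 0" using c0n lenhs by (auto simp: restrict_map_def domIff split: if_splits)
          then show False using col0[OF c0n] by simp
        qed
        have "f x = (hs ! 0) x" using fc[OF n0] x unfolding map_le_def by blast
        also have "\<dots> = h x" using xh n0 by (simp add: hs_nth hsc_h)
        also have "\<dots> = (hsL ! i) x" using hi(2) xi unfolding map_le_def by simp
        finally show "f x = (hsL ! i) x" .
      qed
      then have "hsL ! i \<in> U prim \<eta> (fst (R ! j))" using U_up f(1) hi(1) by blast
      then show False using neg i j PO sem1_U[OF cf(3)[OF j]] by auto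
    qed
  qed
qed


theorem mainTheorem10:
  fixes prim :: "'p \<Rightarrow> ('v \<Rightarrow> int) \<Rightarrow> heap set"
    and \<eta> :: "'v \<Rightarrow> int"
    and L R :: "(('p, 'v, 'a) assn \<times> 'a list) list"
  assumes "canonical L R"
  shows "parametricity_condition prim \<eta> L R \<longleftrightarrow>
         (\<forall>n\<ge>1. valid_n prim n \<eta> (canon_lhs L) (canon_rhs R))"
  using pc_valid[OF assms] valid_pc[OF assms] by blast

end
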